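(* For all integers $n\ge0$ and $d\ge1$, \[ \sum_{n_1>n_2>\cdots>n_d>n}\frac{a_{n_1}}{(2n_1-1)\cdots(2n_d-1)}=a_n . \]
   Context: $a_0=1$ and $a_n=\frac{1}{4^n}\binom{2n}{n}$ for $n\ge1$. *)

theory Defs
  imports "HOL-Analysis.Analysis"
begin

definition a :: "nat \<Rightarrow> real" where
  "a n = (if n = 0 then 1 else real (2 * n choose n) / 4 ^ n)"

end

theory Submission
  imports Defs
begin
lemma a_alt: "a m = real (2 * m choose m) / 4 ^ m"
  by (simp add: a_def)
lemma aux_nat:
  fixes x u p y q z :: nat
  assumes h1: "x * u = p * y" and h2: "u * y = q * z"
  shows "x * u * u = p * q * z"
proof -
  have "x * u * u = p * y * u" by (simp only: h1)
  also have "\<dots> = p * (u * y)" by (simp only: ac_simps)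
  also have "\<dots> = p * (q * z)" by (simp only: h2)
  finally show ?thesis by (simp only: mult.assoc)
qed
lemma choose_rec: "(2 * Suc m choose Suc m) * (Suc m) * (Suc m) = (2*m+2)*(2*m+1)*(2 * m choose m)"
proof -
  have e: "2 * Suc m = Suc (2*m+1)" by simp
  have 1: "(2 * Suc m choose Suc m) * Suc m = (2*m+2) * (2*m+1 choose m)"
    unfolding e using Suc_times_binomial_eq[of "2*m+1" m] by simp
  have 2: "Suc m * (2*m+1 choose m) = (2*m+1) * (2*m choose m)"
    using binomial_absorb_comp[of "2*m+1" m] by simp
  show ?thesis by (rule aux_nat[OF 1 2])
qed
lemma a_rec: "a (Suc m) = a m * (2*real m+1) / (2*real m+2)"
proof -
  define B1 where "B1 = real (2 * Suc m choose Suc m)"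
  define B0 where "B0 = real (2 * m choose m)"
  have h: "B1 * (real m + 1) * (real m + 1) = (2*real m+2)*(2*real m+1)*B0"
    using arg_cong[OF choose_rec[of m], of real] unfolding B1_def B0_def
    by (simp only: of_nat_mult of_nat_add of_nat_numeral of_nat_1 of_nat_Suc add.commute)
  have "a (Suc m) = B1 / 4 ^ Suc m" unfolding B1_def by (rule a_alt)
  have "a m = B0 / 4 ^ m" unfolding B0_def by (rule a_alt)
  have hB: "B1 * (real m + 1) = 2*(2*real m+1)*B0"
  proof -
    have p: "real m + 1 \<noteq> 0" by (simp add: add_nonneg_eq_0_iff)
    have "(B1 * (real m + 1)) * (real m + 1) = (2*(2*real m+1)*B0) * (real m + 1)"
      using h by (simp add: algebra_simps)
    thus ?thesis using p by simp
  qed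
  have "a (Suc m) * (2*real m+2) = (B1*(real m+1)) / (2*4^m)"
    unfolding \<open>a (Suc m) = B1 / 4 ^ Suc m\<close> by (simp add: field_simps)
  also have "\<dots> = (2*(2*real m+1)*B0)/(2*4^m)" by (simp only: hB)
  also have "\<dots> = a m * (2*real m+1)" unfolding \<open>a m = B0 / 4 ^ m\<close> by (simp add: field_simps)
  finally have "a (Suc m) * (2*real m+2) = a m * (2*real m+1)" .
  moreover have "2*real m+2 \<noteq> 0" by simp
  ultimately show ?thesis by (simp add: eq_divide_eq)
qed
lemma a_nonneg: "a m \<ge> 0" by (simp add: a_def)
lemma a_sq: "a m ^ 2 \<le> 1 / (2 * m + 1)"
proof (induction m)
  case 0 then show ?case by (simp add: a_def)
next
  case (Suc m)
  have "a (Suc m) ^ 2 = a m ^ 2 * ((2*real m+1) / (2*real m+2))^2" by (simp add: a_rec power_mult_distrib power_divide add.commute)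
  also have "\<dots> \<le> 1 / (2 * real m + 1) * ((2*real m+1) / (2*real m+2))^2"
    by (rule mult_right_mono[OF Suc.IH]) simp
  also have "\<dots> = (2*real m+1) / (2*real m+2)^2"
  proof -
    have "2*real m+1 \<noteq> 0" by simp
    thus ?thesis by (simp add: power2_eq_square)
  qed
  also have "\<dots> \<le> 1 / (2 * real (Suc m) + 1)"
  proof -
    have i: "(2*real m+1)*(2*real (Suc m)+1) \<le> (2*real m+2)^2" by (simp add: power2_eq_square algebra_simps)
    have "(2*real m+2)^2 > 0" "2*real(Suc m)+1 > 0" by auto
    thus ?thesis using i by (simp add: divide_simps)
  qed
  finally show ?case .
qed
lemma a_lim: "a \<longlonglongrightarrow> 0"
proof -
  have lim: "(\<lambda>m. sqrt (inverse (real (Suc m)))) \<longlonglongrightarrow> 0"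
    using tendsto_real_sqrt[OF LIMSEQ_inverse_real_of_nat] by simp
  have le: "a m \<le> sqrt (inverse (real (Suc m)))" for m
  proof -
    have "1 / (2 * real m + 1) \<le> 1 / (real m + 1)"
      by (rule divide_left_mono) auto
    hence "1 / (2 * real m + 1) \<le> inverse (real (Suc m))"
      by (simp add: inverse_eq_divide add.commute)
    hence "a m ^ 2 \<le> inverse (real (Suc m))"
      using a_sq[of m] by linarith
    thus ?thesis by (rule real_le_rsqrt)
  qed
  show ?thesis
  proof (rule tendsto_sandwich[OF _ _ tendsto_const lim])
    show "\<forall>\<^sub>F m in sequentially. 0 \<le> a m" by (simp add: a_nonneg)
    show "\<forall>\<^sub>F m in sequentially. a m \<le> sqrt (inverse (real (Suc m)))" using le by simp
  qed
qed
lemma a_tel: "m \<ge> 1 \<Longrightarrow> a m / (2 * real m - 1) = a (m - 1) - a m"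
proof -
  assume "m \<ge> 1" then obtain k where k: "m = Suc k" by (cases m) auto
  show ?thesis unfolding k using a_rec[of k] by (simp add: field_simps)
qed
lemma tel_sum: "((\<lambda>m. a m / (2 * real m - 1)) has_sum a n) {n<..}"
proof -
  have "(\<lambda>k. a (n+k) - a (Suc (n+k))) sums (a (n+0) - 0)"
  proof -
    have "(\<lambda>k. a (n+k)) \<longlonglongrightarrow> 0"
      using LIMSEQ_ignore_initial_segment[OF a_lim, of n] by (simp add: add.commute)
    from telescope_sums'[OF this] show ?thesis by simp
  qed
  hence "(\<lambda>k. a (Suc (n+k)) / (2 * real (Suc (n+k)) - 1)) sums a n"
    using a_tel[of "Suc (n+k)" for k] by simp
  hence "((\<lambda>k. a (Suc (n+k)) / (2 * real (Suc (n+k)) - 1)) has_sum a n) UNIV"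
    by (rule sums_nonneg_imp_has_sum) (simp add: a_nonneg)
  moreover have "bij_betw (\<lambda>k. Suc (n+k)) UNIV {n<..}"
    by (rule bij_betwI[where g="\<lambda>m. m - Suc n"]) auto
  ultimately show ?thesis using has_sum_reindex_bij_betw[of "\<lambda>k. Suc (n+k)" UNIV "{n<..}" "\<lambda>m. a m / (2 * real m - 1)"]
    by simp
qed

definition S :: "nat \<Rightarrow> nat \<Rightarrow> nat list set" where
  "S d n = {ns :: nat list. length ns = d \<and> sorted_wrt (>) ns \<and> (\<forall>k\<in>set ns. k > n)}"

definition F :: "nat list \<Rightarrow> real" where
  "F ns = a (hd ns) / (\<Prod>k\<leftarrow>ns. 2 * real k - 1)"

lemma F_snoc: "xs \<noteq> [] \<Longrightarrow> F (xs @ [m]) = F xs / (2 * real m - 1)"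
  by (simp add: F_def)

lemma P_nonneg: "\<forall>k\<in>set ns. k > (n::nat) \<Longrightarrow> (\<Prod>k\<leftarrow>ns. 2 * real k - 1) \<ge> 0"
proof (induction ns)
  case Nil then show ?case by simp
next
  case (Cons x xs)
  have "2 * real x - 1 \<ge> 0" using Cons.prems by simp
  moreover have "(\<Prod>k\<leftarrow>xs. 2 * real k - 1) \<ge> 0" using Cons by simp
  ultimately show ?case by simp
qed
lemma F_nonneg: "ns \<in> S d n \<Longrightarrow> F ns \<ge> 0"
  unfolding F_def using P_nonneg[of ns n] a_nonneg[of "hd ns"]
  by (intro divide_nonneg_nonneg) (auto simp: S_def)

lemma S_snoc: "(xs @ [m] \<in> S (Suc d) n) \<longleftrightarrow> (m > n \<and> xs \<in> S d m)"
  by (auto simp: S_def sorted_wrt_append)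

lemma main: "d \<ge> 1 \<Longrightarrow> (F has_sum a n) (S d n)"
proof (induction d arbitrary: n rule: dec_induct)
  case base
  have "bij_betw (\<lambda>m. [m]) {n<..} (S 1 n)"
    by (rule bij_betwI[where g=hd]) (auto simp: S_def length_Suc_conv)
  moreover have "((\<lambda>m. F [m]) has_sum a n) {n<..}"
    using tel_sum[of n] by (simp add: F_def)
  ultimately show ?case using has_sum_reindex_bij_betw[of "\<lambda>m. [m]" "{n<..}" "S 1 n" F] by simp
next
  case (step d)
  define A where "A = Sigma {n<..} (\<lambda>m. S d m)"
  have fib: "((\<lambda>xs. F (xs @ [m])) has_sum (a m / (2 * real m - 1))) (S d m)" if "m \<in> {n<..}" for m
  proof -
    have "((\<lambda>xs. F xs / (2 * real m - 1)) has_sum (a m / (2 * real m - 1))) (S d m)"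
      using step.IH[of m] by (rule has_sum_divide_const)
    moreover have eq: "F (xs @ [m]) = F xs / (2 * real m - 1)" if "xs \<in> S d m" for xs
    proof -
      have "length xs = d" using that by (simp add: S_def)
      hence "xs \<noteq> []" using step.hyps by auto
      thus ?thesis by (rule F_snoc)
    qed
    ultimately show ?thesis using has_sum_cong[of "S d m" "\<lambda>xs. F (xs @ [m])" "\<lambda>xs. F xs / (2 * real m - 1)", OF eq] by blast
  qed
  have "((\<lambda>p. F (snd p @ [fst p])) has_sum a n) A"
    unfolding A_def
  proof (rule has_sum_SigmaI)
    show "((\<lambda>xs. F (snd (m, xs) @ [fst (m, xs)])) has_sum (a m / (2 * real m - 1))) (S d m)"
      if "m \<in> {n<..}" for m using fib[OF that] by simp
    show "((\<lambda>m. a m / (2 * real m - 1)) has_sum a n) {n<..}" by (rule tel_sum)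
    show "(\<lambda>p. F (snd p @ [fst p])) summable_on Sigma {n<..} (\<lambda>m. S d m)"
    proof (rule summable_on_SigmaI)
      show "((\<lambda>xs. F (snd (m, xs) @ [fst (m, xs)])) has_sum (a m / (2 * real m - 1))) (S d m)"
        if "m \<in> {n<..}" for m using fib[OF that] by simp
      show "(\<lambda>m. a m / (2 * real m - 1)) summable_on {n<..}"
        using tel_sum has_sum_imp_summable by blast
      show "0 \<le> F (snd (m, xs) @ [fst (m, xs)])" if "m \<in> {n<..}" "xs \<in> S d m" for m xs
        using that S_snoc[of xs m d n] by (intro F_nonneg[of _ "Suc d" n]) simp
    qed
  qed
  moreover have "bij_betw (\<lambda>p. snd p @ [fst p]) A (S (Suc d) n)"
  proof (rule bij_betwI[where g="\<lambda>ys. (last ys, butlast ys)"])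
    show "(\<lambda>p. snd p @ [fst p]) \<in> A \<rightarrow> S (Suc d) n"
      unfolding A_def using S_snoc by auto
    show "(\<lambda>ys. (last ys, butlast ys)) \<in> S (Suc d) n \<rightarrow> A"
    proof
      fix ys assume ys: "ys \<in> S (Suc d) n"
      hence "ys \<noteq> []" by (auto simp: S_def)
      with ys have "butlast ys @ [last ys] \<in> S (Suc d) n" by simp
      thus "(last ys, butlast ys) \<in> A" unfolding A_def using S_snoc by auto
    qed
    show "(last (snd p @ [fst p]), butlast (snd p @ [fst p])) = p" if "p \<in> A" for p by auto
    show "snd (last ys, butlast ys) @ [fst (last ys, butlast ys)] = ys" if "ys \<in> S (Suc d) n" for ys
    proof -
      have "ys \<noteq> []" using that by (auto simp: S_def)
      thus ?thesis by simp
    qed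
  qed
  ultimately show ?case
    using has_sum_reindex_bij_betw[of "\<lambda>p. snd p @ [fst p]" A "S (Suc d) n" F] by simp
qed

theorem corollary4p3:
  fixes n d :: nat
  assumes "d \<ge> 1"
  shows "((\<lambda>ns. a (hd ns) / (\<Prod>k\<leftarrow>ns. 2 * real k - 1)) has_sum a n)
           {ns :: nat list. length ns = d \<and> sorted_wrt (>) ns \<and> (\<forall>k\<in>set ns. k > n)}"
  using main[OF assms, of n] unfolding F_def[abs_def] S_def .

end
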